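(* Let $X,Z\in\mathbb{R}^{n\times r}$ with $XX^{T}\ne ZZ^{T}$. Then $$\delta(X,Z)\ge\max_{t\ge0}\frac{\cos\theta(t)-t}{1+t},$$ where for $t\ge0$, $$\cos\theta(t):=\max_{y,\,W_{i,j}}\left\{\frac{\mathbf{e}^{T}[\mathbf{J}y-w]}{\|\mathbf{e}\|\,\|\mathbf{J}y-w\|}\;:\;\frac{\langle\mathbf{J}^{T}\mathbf{J},W\rangle}{\|\mathbf{e}\|\,\|\mathbf{J}y-w\|}=2t,\;W\succeq0\right\},$$ the maximization being over $y\in\mathbb{R}^{nr}$ and $W_{i,j}\in\mathbb{R}^{n\times n}$ for $i,j\in\{1,\dots,r\}$, with $W=[W_{i,j}]_{i,j=1}^{r}\in\mathbb{R}^{nr\times nr}$ and $w=\sum_{i=1}^{r}\mathrm{vec}(W_{i,i})$.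
   Context: $\mathbf{e}=\mathrm{vec}(XX^{T}-ZZ^{T})\in\mathbb{R}^{n^{2}}$ (column-stacking vectorization) and $\mathbf{J}\in\mathbb{R}^{n^{2}\times nr}$ satisfies $\mathbf{J}\,\mathrm{vec}(Y)=\mathrm{vec}(XY^{T}+YX^{T})$ for all $Y\in\mathbb{R}^{n\times r}$; $\langle A,B\rangle=\mathrm{tr}(A^{T}B)$. A linear map $\mathcal{A}:\mathbb{R}^{n\times n}\to\mathbb{R}^{m}$ satisfies $(\delta,p)$-RIP if $0\le\delta<1$ and there is $\nu>0$ with $(1-\delta)\|E\|_{F}^{2}\le\frac{1}{\nu}\|\mathcal{A}(E)\|^{2}\le(1+\delta)\|E\|_{F}^{2}$ for all $E$ of rank at most $p$. With $r^{\star}=\mathrm{rank}(Z)$, $\delta(X,Z)$ is the infimum of all $\delta$ for which there exist $m\ge1$ and linear $\mathcal{A}:\mathbb{R}^{n\times n}\to\mathbb{R}^{m}$ satisfying $(\delta,r+r^{\star})$-RIP with $\nabla f_{\mathcal{A}}(X)=0$ and $\nabla^{2}f_{\mathcal{A}}(X)\succeq0$, where $f_{\mathcal{A}}(U)=\|\mathcal{A}(UU^{T}-ZZ^{T})\|^{2}$ on $\mathbb{R}^{n\times r}$. *)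

theory Defs
  imports "HOL-Analysis.Analysis"
begin

text \<open>Matrices in R^(a x c) are real^'c^'a (rows indexed by 'a). The vectorization
  vec(M) is indexed by pairs (row, column); this is column-stacking up to the fixed
  identification of the index set of R^(ac) with 'a x 'c.\<close>

definition vecm :: "real^'c^'a \<Rightarrow> real^('a \<times> 'c)" where
  "vecm M = (\<chi> p. M $ fst p $ snd p)"

definition unvecm :: "real^('a \<times> 'c) \<Rightarrow> real^'c^'a" where
  "unvecm v = (\<chi> i j. v $ (i, j))"

definition err_vec :: "real^'r^'n \<Rightarrow> real^'r^'n \<Rightarrow> real^('n \<times> 'n)" where
  "err_vec X Z = vecm (X ** transpose X - Z ** transpose Z)"

definition Jmat :: "real^'r^'n \<Rightarrow> real^('n::finite \<times> 'r::finite)^('n \<times> 'n)" where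
  "Jmat X = matrix (\<lambda>v. vecm (X ** transpose (unvecm v) + unvecm v ** transpose X))"

definition psd :: "real^'k^'k \<Rightarrow> bool" where
  "psd M \<longleftrightarrow> transpose M = M \<and> (\<forall>x. 0 \<le> x \<bullet> (M *v x))"

definition frob_inner :: "real^'k^'k \<Rightarrow> real^'k^'k \<Rightarrow> real" where
  "frob_inner A B = trace (transpose A ** B)"

text \<open>W in R^(nr x nr) indexed by ('n x 'r) pairs, consistent with vec; the block
  W_{i,j} in R^(n x n) has entries (W_{i,j})_{a,b} = W $ (a,i) $ (b,j).
  w = sum_i vec(W_{i,i}).\<close>
definition wvec :: "real^('n::finite \<times> 'r::finite)^('n::finite \<times> 'r::finite) \<Rightarrow> real^('n \<times> 'n)" where
  "wvec W = (\<chi> p. \<Sum>i\<in>UNIV. W $ (fst p, i) $ (snd p, i))"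

definition feasible :: "real^'r^'n \<Rightarrow> real^'r^'n \<Rightarrow> real \<Rightarrow> real^('n::finite \<times> 'r::finite)
    \<Rightarrow> real^('n::finite \<times> 'r::finite)^('n::finite \<times> 'r::finite) \<Rightarrow> bool" where
  "feasible X Z t y W \<longleftrightarrow>
     psd W \<and> Jmat X *v y - wvec W \<noteq> 0 \<and>
     frob_inner (transpose (Jmat X) ** Jmat X) W
       / (norm (err_vec X Z) * norm (Jmat X *v y - wvec W)) = 2 * t"

definition objective :: "real^'r^'n \<Rightarrow> real^'r^'n \<Rightarrow> real^('n::finite \<times> 'r::finite)
    \<Rightarrow> real^('n::finite \<times> 'r::finite)^('n::finite \<times> 'r::finite) \<Rightarrow> real" where
  "objective X Z y W =
     (err_vec X Z \<bullet> (Jmat X *v y - wvec W))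
       / (norm (err_vec X Z) * norm (Jmat X *v y - wvec W))"

definition cos_theta :: "real^'r^'n \<Rightarrow> real^'r^'n \<Rightarrow> real \<Rightarrow> real" where
  "cos_theta X Z t = Sup {objective X Z y W | y W. feasible X Z t y W}"

text \<open>A linear map A : R^(n x n) -> R^m is given by its m coordinate functionals
  A 0, ..., A (m-1); its Euclidean norm squared is the sum of squares.\<close>
definition sqnormA :: "nat \<Rightarrow> (nat \<Rightarrow> real^'n^'n \<Rightarrow> real) \<Rightarrow> real^'n^'n \<Rightarrow> real" where
  "sqnormA m A E = (\<Sum>i<m. (A i E)\<^sup>2)"

definition is_RIP :: "nat \<Rightarrow> (nat \<Rightarrow> real^'n^'n \<Rightarrow> real) \<Rightarrow> real \<Rightarrow> nat \<Rightarrow> bool" where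
  "is_RIP m A \<delta> p \<longleftrightarrow> 0 \<le> \<delta> \<and> \<delta> < 1 \<and>
     (\<exists>\<nu>>0. \<forall>E::real^'n^'n. rank E \<le> p \<longrightarrow>
        (1 - \<delta>) * (norm E)\<^sup>2 \<le> (1 / \<nu>) * sqnormA m A E \<and>
        (1 / \<nu>) * sqnormA m A E \<le> (1 + \<delta>) * (norm E)\<^sup>2)"

definition fA :: "nat \<Rightarrow> (nat \<Rightarrow> real^'n^'n \<Rightarrow> real) \<Rightarrow> real^'r^'n \<Rightarrow> real^'r^'n \<Rightarrow> real" where
  "fA m A Z U = sqnormA m A (U ** transpose U - Z ** transpose Z)"

definition grad_zero :: "(real^'r^'n \<Rightarrow> real) \<Rightarrow> real^'r^'n \<Rightarrow> bool" where
  "grad_zero f X \<longleftrightarrow> (f has_derivative (\<lambda>_. 0)) (at X)"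

definition hess_psd :: "(real^'r^'n \<Rightarrow> real) \<Rightarrow> real^'r^'n \<Rightarrow> bool" where
  "hess_psd f X \<longleftrightarrow> (\<exists>D2. ((\<lambda>U. Blinfun (frechet_derivative f (at U))) has_derivative D2) (at X)
      \<and> (\<forall>Y. 0 \<le> blinfun_apply (D2 Y) Y))"

definition delta_XZ :: "real^'r^'n \<Rightarrow> real^'r^'n \<Rightarrow> ereal" where
  "delta_XZ X Z = Inf (ereal ` {\<delta>. \<exists>m\<ge>1. \<exists>A :: nat \<Rightarrow> real^'n^'n \<Rightarrow> real.
       (\<forall>i<m. linear (A i)) \<and> is_RIP m A \<delta> (CARD('r) + rank Z) \<and>
       grad_zero (fA m A Z) X \<and> hess_psd (fA m A Z) X})"

end

theory Submission
  imports Defs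
begin

lemma qf_expand: "(z::real^'k) \<bullet> (W *v z) = (\<Sum>i\<in>UNIV. \<Sum>j\<in>UNIV. z$i * W$i$j * z$j)"
  by (simp add: inner_vec_def matrix_vector_mult_def sum_distrib_left mult.assoc)

lemma psd_diag0:
  fixes W :: "real^'k^'k"
  assumes "psd W" "W$x$x = 0"
  shows "W$x$j = 0"
proof (rule ccontr)
  assume ne: "W$x$j \<noteq> 0"
  then have jx: "j \<noteq> x" using assms(2) by auto
  have sym: "W$j$x = W$x$j" using assms(1) unfolding psd_def
    by (metis transpose_def vec_lambda_beta)
  define s where "s = - (W$j$j + 1) / (2 * W$x$j)"
  define z :: "real^'k" where "z = (\<chi> i. if i = x then s else if i = j then 1 else 0)"
  have "0 \<le> z \<bullet> (W *v z)" using assms(1) unfolding psd_def by blast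
  also have "z \<bullet> (W *v z) = (\<Sum>i\<in>UNIV. \<Sum>k\<in>UNIV. z$i * W$i$k * z$k)" by (rule qf_expand)
  also have "\<dots> = (\<Sum>i\<in>{x,j}. \<Sum>k\<in>{x,j}. z$i * W$i$k * z$k)"
  proof -
    have "\<And>i. (\<Sum>k\<in>UNIV. z$i * W$i$k * z$k) = (\<Sum>k\<in>{x,j}. z$i * W$i$k * z$k)"
      by (rule sum.mono_neutral_right) (auto simp: z_def)
    then have "(\<Sum>i\<in>UNIV. \<Sum>k\<in>UNIV. z$i * W$i$k * z$k) = (\<Sum>i\<in>UNIV. \<Sum>k\<in>{x,j}. z$i * W$i$k * z$k)" by simp
    also have "\<dots> = (\<Sum>i\<in>{x,j}. \<Sum>k\<in>{x,j}. z$i * W$i$k * z$k)"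
      by (rule sum.mono_neutral_right) (auto simp: z_def)
    finally show ?thesis .
  qed
  also have "\<dots> = s * s * W$x$x + 2 * s * W$x$j + W$j$j"
    using jx sym by (simp add: z_def algebra_simps)
  also have "\<dots> = -1" using ne assms(2) by (simp add: s_def field_simps)
  finally show False by simp
qed

lemma psd_sym: "psd W \<Longrightarrow> W$j$i = W$i$j"
  unfolding psd_def by (metis transpose_def vec_lambda_beta)

lemma qf_sub:
  fixes W :: "real^'k^'k"
  assumes "transpose W = W"
  shows "(z - a) \<bullet> (W *v (z - a)) = z \<bullet> (W *v z) - 2 * (a \<bullet> (W *v z)) + a \<bullet> (W *v a)"
proof -
  have "z \<bullet> (W *v a) = a \<bullet> (W *v z)"
    by (metis assms dot_lmul_matrix inner_commute transpose_matrix_vector)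
  then show ?thesis
    by (simp add: matrix_vector_mult_diff_distrib inner_diff_left inner_diff_right)
qed

lemma axis1_inner: "axis i (1::real) \<bullet> v = v $ i"
  using inner_axis'[of i "1::real" v] by simp

lemma psd_decomp_aux:
  fixes S :: "'k::finite set"
  assumes "finite S"
  shows "\<And>W::real^'k^'k. psd W \<Longrightarrow> (\<forall>i j. i \<notin> S \<longrightarrow> W$i$j = 0) \<Longrightarrow>
     \<exists>V. (\<forall>k. k \<notin> S \<longrightarrow> V k = 0) \<and> (\<forall>i j. W$i$j = (\<Sum>k\<in>UNIV. V k $ i * V k $ j))"
  using assms
proof (induction S rule: finite_induct)
  case empty
  then show ?case by (intro exI[of _ "\<lambda>_. 0"]) auto
next
  case (insert x F W)
  show ?case
  proof (cases "W$x$x = 0")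
    case True
    then have "\<forall>j. W$x$j = 0" using psd_diag0 insert.prems(1) by blast
    then have "\<forall>i j. i \<notin> F \<longrightarrow> W$i$j = 0" using insert.prems(2) by auto
    then obtain V where V: "\<forall>k. k \<notin> F \<longrightarrow> V k = 0" "\<forall>i j. W$i$j = (\<Sum>k\<in>UNIV. V k $ i * V k $ j)"
      using insert.IH insert.prems(1) by blast
    then show ?thesis by (intro exI[of _ V]) auto
  next
    case False
    have "0 \<le> axis x 1 \<bullet> (W *v axis x (1::real))" using insert.prems(1) unfolding psd_def by blast
    also have "axis x 1 \<bullet> (W *v axis x (1::real)) = W$x$x"
      by (simp add: inner_axis' matrix_vector_mult_basis column_def)
    finally have dpos: "0 < W$x$x" using False by linarith
    define d where "d = W$x$x"
    have sd: "sqrt d * sqrt d = d" using dpos d_def by simp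
    have sdpos: "sqrt d > 0" using dpos d_def by simp
    define c :: "real^'k" where "c = (\<chi> i. W$i$x / sqrt d)"
    define W' :: "real^'k^'k" where "W' = W - (\<chi> i j. c$i * c$j)"
    have symW: "transpose W = W" using insert.prems(1) unfolding psd_def by blast
    have symW': "transpose W' = W'"
      unfolding W'_def by (simp add: transpose_def vec_eq_iff psd_sym[OF insert.prems(1)] mult.commute)
    have qfW': "0 \<le> z \<bullet> (W' *v z)" for z
    proof -
      define g where "g = (W *v z) $ x"
      have cz: "c \<bullet> z = g / sqrt d"
        by (simp add: c_def g_def inner_vec_def matrix_vector_mult_def sum_divide_distrib
              psd_sym[OF insert.prems(1), of x] mult.commute)
      have "z \<bullet> (W' *v z) = z \<bullet> (W *v z) - (c \<bullet> z) * (c \<bullet> z)"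
        by (simp add: W'_def matrix_vector_mult_def inner_vec_def algebra_simps
             sum_subtractf sum_distrib_left sum_distrib_right)
      also have "(c \<bullet> z) * (c \<bullet> z) = g * g / d" using cz sd by (simp add: field_simps)
      finally have e1: "z \<bullet> (W' *v z) = z \<bullet> (W *v z) - g * g / d" .
      define a where "a = (g / d) *\<^sub>R axis x (1::real)"
      have "0 \<le> (z - a) \<bullet> (W *v (z - a))" using insert.prems(1) unfolding psd_def by blast
      also have "\<dots> = z \<bullet> (W *v z) - 2 * (a \<bullet> (W *v z)) + a \<bullet> (W *v a)" by (rule qf_sub[OF symW])
      also have "a \<bullet> (W *v z) = g / d * g"
        using axis1_inner[of x "W *v z"] by (simp add: a_def g_def)
      also have "a \<bullet> (W *v a) = (g/d) * (g/d) * d"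
        by (simp add: a_def d_def inner_axis' matrix_vector_mult_scaleR matrix_vector_mult_basis column_def)
      finally have h: "0 \<le> z \<bullet> (W *v z) - 2 * (g / d * g) + g / d * (g / d) * d" .
      have "g / d * (g / d) * d = g * g / d" "g / d * g = g * g / d" using dpos d_def by (simp_all add: field_simps)
      then show ?thesis using h e1 by linarith
    qed
    have psdW': "psd W'" unfolding psd_def using symW' qfW' by blast
    have cout: "c$i = 0" if "i \<notin> insert x F" for i
      using insert.prems(2) that by (simp add: c_def)
    have zeroW': "\<forall>i j. i \<notin> F \<longrightarrow> W'$i$j = 0"
    proof (intro allI impI)
      fix i j assume iF: "i \<notin> F"
      show "W'$i$j = 0"
      proof (cases "i = x")
        case True
        then show ?thesis using sd sdpos
          by (simp add: W'_def c_def d_def psd_sym[OF insert.prems(1), of x j] field_simps)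
      next
        case False
        then show ?thesis using iF cout insert.prems(2) by (simp add: W'_def)
      qed
    qed
    obtain V where V: "\<forall>k. k \<notin> F \<longrightarrow> V k = 0" "\<forall>i j. W'$i$j = (\<Sum>k\<in>UNIV. V k $ i * V k $ j)"
      using insert.IH psdW' zeroW' by blast
    define V' where "V' = V(x := c)"
    have "\<forall>k. k \<notin> insert x F \<longrightarrow> V' k = 0" using V(1) by (simp add: V'_def)
    moreover have "W$i$j = (\<Sum>k\<in>UNIV. V' k $ i * V' k $ j)" for i j
    proof -
      have "(\<Sum>k\<in>UNIV. V' k $ i * V' k $ j) = V' x $ i * V' x $ j + (\<Sum>k\<in>UNIV-{x}. V' k $ i * V' k $ j)"
        by (simp add: sum.remove)
      also have "(\<Sum>k\<in>UNIV-{x}. V' k $ i * V' k $ j) = (\<Sum>k\<in>UNIV-{x}. V k $ i * V k $ j)"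
        by (rule sum.cong) (auto simp: V'_def)
      also have "\<dots> = (\<Sum>k\<in>UNIV. V k $ i * V k $ j)"
        using V(1) insert.hyps(2) by (simp add: sum.remove[of UNIV x])
      also have "\<dots> = W'$i$j" using V(2) by simp
      finally show ?thesis by (simp add: V'_def W'_def)
    qed
    ultimately show ?thesis by blast
  qed
qed

lemma psd_decomp:
  fixes W :: "real^'k^'k"
  assumes "psd W"
  shows "\<exists>V::'k \<Rightarrow> real^'k. \<forall>i j. W$i$j = (\<Sum>k\<in>UNIV. V k $ i * V k $ j)"
  using psd_decomp_aux[of UNIV W] assms by simp

definition mm :: "real^'r^'n \<Rightarrow> real^'r^'n \<Rightarrow> real^'n^'n" where
  "mm U V = U ** transpose V"

lemma bilinear_mm: "bilinear mm"
  unfolding bilinear_def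
proof (intro conjI allI)
  show "linear (mm x)" for x
    by (rule linearI) (simp_all add: mm_def vec_eq_iff matrix_matrix_mult_def transpose_def
        sum.distrib sum_distrib_left algebra_simps)
  show "linear (\<lambda>x. mm x y)" for y
    by (rule linearI) (simp_all add: mm_def vec_eq_iff matrix_matrix_mult_def transpose_def
        sum.distrib sum_distrib_left algebra_simps)
qed

lemma bb_mm: "bounded_bilinear mm"
  using bilinear_mm bilinear_conv_bounded_bilinear by blast

lemma deriv_G:
  "((\<lambda>U::real^'r^'n. U ** transpose U - C) has_derivative (\<lambda>Y. U ** transpose Y + Y ** transpose U)) (at U within s)"
proof -
  have "((\<lambda>U. mm U U) has_derivative (\<lambda>h. mm U h + mm h U)) (at U within s)"
    by (rule bounded_bilinear.FDERIV[OF bb_mm]) (auto intro: has_derivative_ident)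
  then have "((\<lambda>U. mm U U - C) has_derivative (\<lambda>h. mm U h + mm h U)) (at U within s)"
    by (auto intro!: derivative_eq_intros)
  then show ?thesis by (simp add: mm_def)
qed

lemma deriv_dG:
  "((\<lambda>U::real^'r^'n. U ** transpose Y + Y ** transpose U) has_derivative (\<lambda>V. V ** transpose Y + Y ** transpose V)) (at U within s)"
proof -
  have "((\<lambda>U. mm U Y + mm Y U) has_derivative (\<lambda>h. mm h Y + mm Y h)) (at U within s)"
    by (intro has_derivative_add bounded_linear.has_derivative[OF bounded_bilinear.bounded_linear_left[OF bb_mm]]
       bounded_linear.has_derivative[OF bounded_bilinear.bounded_linear_right[OF bb_mm]] has_derivative_ident)
  then show ?thesis by (simp add: mm_def)
qed

lemma bl_A: "linear (L::real^'n^'n \<Rightarrow> real) \<Longrightarrow> bounded_linear L"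
  using linear_conv_bounded_linear by blast

definition fd :: "nat \<Rightarrow> (nat \<Rightarrow> real^'n^'n \<Rightarrow> real) \<Rightarrow> real^'r^'n \<Rightarrow> real^'r^'n \<Rightarrow> real^'r^'n \<Rightarrow> real" where
  "fd m A Z U Y = (\<Sum>i<m. 2 * (A i (U ** transpose U - Z ** transpose Z) * A i (U ** transpose Y + Y ** transpose U)))"

lemma fA_deriv:
  assumes lin: "\<forall>i<m. linear (A i)"
  shows "(fA m A Z has_derivative fd m A Z U) (at U)"
proof -
  have "((\<lambda>U. \<Sum>i<m. A i (U ** transpose U - Z ** transpose Z) * A i (U ** transpose U - Z ** transpose Z))
     has_derivative (\<lambda>Y. \<Sum>i<m. A i (U ** transpose U - Z ** transpose Z) * A i (U ** transpose Y + Y ** transpose U)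
        + A i (U ** transpose Y + Y ** transpose U) * A i (U ** transpose U - Z ** transpose Z))) (at U)"
    apply (rule has_derivative_sum)
    apply (rule has_derivative_mult)
     apply (rule bounded_linear.has_derivative[OF bl_A deriv_G], use lin in simp)
    apply (rule bounded_linear.has_derivative[OF bl_A deriv_G], use lin in simp)
    done
  then show ?thesis
    unfolding fA_def sqnormA_def fd_def power2_eq_square
    by (rule has_derivative_eq_rhs) (simp add: fun_eq_iff sum_distrib_left algebra_simps)
qed

definition fdd :: "nat \<Rightarrow> (nat \<Rightarrow> real^'n^'n \<Rightarrow> real) \<Rightarrow> real^'r^'n \<Rightarrow> real^'r^'n \<Rightarrow> real^'r^'n \<Rightarrow> real^'r^'n \<Rightarrow> real" where
  "fdd m A Z U Y V = (\<Sum>i<m. 2 * (A i (U ** transpose V + V ** transpose U) * A i (U ** transpose Y + Y ** transpose U)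
      + A i (U ** transpose U - Z ** transpose Z) * A i (V ** transpose Y + Y ** transpose V)))"

lemma fd_deriv:
  assumes lin: "\<forall>i<m. linear (A i)"
  shows "((\<lambda>U. fd m A Z U Y) has_derivative fdd m A Z U Y) (at U)"
proof -
  have "((\<lambda>U. \<Sum>i<m. 2 * (A i (U ** transpose U - Z ** transpose Z) * A i (U ** transpose Y + Y ** transpose U)))
     has_derivative (\<lambda>V. \<Sum>i<m. 2 * (A i (U ** transpose U - Z ** transpose Z) * A i (V ** transpose Y + Y ** transpose V)
        + A i (U ** transpose V + V ** transpose U) * A i (U ** transpose Y + Y ** transpose U)))) (at U)"
    apply (rule has_derivative_sum)
    apply (rule has_derivative_mult_right)
    apply (rule has_derivative_mult)
     apply (rule bounded_linear.has_derivative[OF bl_A deriv_G], use lin in simp)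
    apply (rule bounded_linear.has_derivative[OF bl_A deriv_dG], use lin in simp)
    done
  then show ?thesis
    unfolding fd_def fdd_def
    by (rule has_derivative_eq_rhs) (simp add: fun_eq_iff algebra_simps)
qed

lemma grad_zero_eq:
  assumes lin: "\<forall>i<m. linear (A i)" and g: "grad_zero (fA m A Z) X"
  shows "fd m A Z X Y = 0"
proof -
  have "fd m A Z X = (\<lambda>_. 0)"
    using has_derivative_unique[OF fA_deriv[OF lin] g[unfolded grad_zero_def]] .
  then show ?thesis by simp
qed

lemma hess_eq:
  assumes lin: "\<forall>i<m. linear (A i)" and h: "hess_psd (fA m A Z) X"
  shows "0 \<le> fdd m A Z X Y Y"
proof -
  obtain D2 where D2: "((\<lambda>U. Blinfun (frechet_derivative (fA m A Z) (at U))) has_derivative D2) (at X)"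
    "\<forall>Y. 0 \<le> blinfun_apply (D2 Y) Y"
    using h unfolding hess_psd_def by blast
  have fdeq: "blinfun_apply (Blinfun (frechet_derivative (fA m A Z) (at U))) = fd m A Z U" for U
  proof -
    have "frechet_derivative (fA m A Z) (at U) = fd m A Z U"
      by (rule sym, rule frechet_derivative_at[OF fA_deriv[OF lin]])
    moreover have "bounded_linear (fd m A Z U)"
      using fA_deriv[OF lin] has_derivative_bounded_linear by blast
    ultimately show ?thesis by (simp add: bounded_linear_Blinfun_apply)
  qed
  have "((\<lambda>U. blinfun_apply (Blinfun (frechet_derivative (fA m A Z) (at U))) Y) has_derivative
      (\<lambda>V. blinfun_apply (Blinfun (frechet_derivative (fA m A Z) (at X))) 0 + blinfun_apply (D2 V) Y)) (at X)"
    by (rule bounded_bilinear.FDERIV[OF bounded_bilinear_blinfun_apply D2(1)]) simp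
  then have "((\<lambda>U. fd m A Z U Y) has_derivative (\<lambda>V. blinfun_apply (D2 V) Y)) (at X)"
    using linear_0[OF bounded_linear.linear, OF has_derivative_bounded_linear[OF fA_deriv[OF lin, of Z X]]]
    by (simp add: fdeq)
  then have "(\<lambda>V. blinfun_apply (D2 V) Y) = fdd m A Z X Y"
    using has_derivative_unique fd_deriv[OF lin] by blast
  then show ?thesis using D2(2) by metis
qed

lemma unvecm_vecm[simp]: "unvecm (vecm M) = M"
  by (simp add: unvecm_def vecm_def vec_eq_iff)

lemma vecm_unvecm[simp]: "vecm (unvecm v) = v"
  by (simp add: unvecm_def vecm_def vec_eq_iff)

lemma inner_vecm: "vecm M \<bullet> vecm N = M \<bullet> (N::real^'c^'a)"
proof -
  have "vecm M \<bullet> vecm N = (\<Sum>i\<in>UNIV \<times> UNIV. M $ fst i $ snd i * N $ fst i $ snd i)"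
    by (simp add: vecm_def inner_vec_def)
  also have "\<dots> = (\<Sum>a\<in>UNIV. \<Sum>b\<in>UNIV. M $ a $ b * N $ a $ b)"
    by (simp add: sum.cartesian_product case_prod_beta)
  finally show ?thesis by (simp add: inner_vec_def)
qed

lemma norm_vecm: "norm (vecm M) = norm (M::real^'c^'a)"
  by (simp add: norm_eq_sqrt_inner inner_vecm)

lemma vecm_add: "vecm (M + N) = vecm M + vecm N" by (simp add: vecm_def vec_eq_iff)
lemma vecm_diff: "vecm (M - N) = vecm M - vecm N" by (simp add: vecm_def vec_eq_iff)

lemma Jmat_apply: "Jmat X *v v = vecm (X ** transpose (unvecm v) + unvecm v ** transpose X)"
proof -
  have "Vector_Spaces.linear (*s) (*s) (\<lambda>v. vecm (X ** transpose (unvecm v) + unvecm v ** transpose X))"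
    unfolding linear_matrix_vector_mul_eq
    by (rule linearI)
      (simp_all add: vecm_def unvecm_def vec_eq_iff matrix_matrix_mult_def transpose_def
        sum.distrib sum_distrib_left algebra_simps)
  then show ?thesis unfolding Jmat_def by (rule matrix_works)
qed

definition outer :: "real^'k \<Rightarrow> real^'k^'k" where "outer v = (\<chi> i j. v$i * v$j)"

lemma frob_sum: "finite K \<Longrightarrow> frob_inner M (\<Sum>k\<in>K. F k) = (\<Sum>k\<in>K. frob_inner M (F k))"
  by (induction K rule: finite_induct) (simp_all add: frob_inner_def matrix_add_ldistrib trace_def sum.distrib)

lemma frob_outer:
  fixes J :: "real^'k^'m"
  shows "frob_inner (transpose J ** J) (outer v) = (norm (J *v v))\<^sup>2"
proof -
  have "frob_inner (transpose J ** J) (outer v) = (\<Sum>p\<in>UNIV. \<Sum>q\<in>UNIV. \<Sum>s\<in>UNIV. J$s$q * J$s$p * (v$q * v$p))"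
    by (simp add: frob_inner_def trace_def outer_def matrix_matrix_mult_def transpose_def sum_distrib_right)
  also have "\<dots> = (\<Sum>p\<in>UNIV. \<Sum>s\<in>UNIV. \<Sum>q\<in>UNIV. J$s$q * J$s$p * (v$q * v$p))"
    by (rule sum.cong[OF refl], rule sum.swap)
  also have "\<dots> = (\<Sum>s\<in>UNIV. \<Sum>p\<in>UNIV. \<Sum>q\<in>UNIV. J$s$q * J$s$p * (v$q * v$p))"
    by (rule sum.swap)
  also have "\<dots> = (\<Sum>s\<in>UNIV. (\<Sum>q\<in>UNIV. J$s$q * v$q) * (\<Sum>p\<in>UNIV. J$s$p * v$p))"
  proof (rule sum.cong[OF refl])
    fix s
    have "(\<Sum>p\<in>UNIV. \<Sum>q\<in>UNIV. J$s$q * J$s$p * (v$q * v$p)) = (\<Sum>q\<in>UNIV. \<Sum>p\<in>UNIV. J$s$q * J$s$p * (v$q * v$p))"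
      by (rule sum.swap)
    also have "\<dots> = (\<Sum>q\<in>UNIV. \<Sum>p\<in>UNIV. (J$s$q * v$q) * (J$s$p * v$p))"
      by (simp only: mult_ac)
    also have "\<dots> = (\<Sum>q\<in>UNIV. J$s$q * v$q) * (\<Sum>p\<in>UNIV. J$s$p * v$p)"
      by (simp only: sum_product)
    finally show "(\<Sum>p\<in>UNIV. \<Sum>q\<in>UNIV. J$s$q * J$s$p * (v$q * v$p)) = (\<Sum>q\<in>UNIV. J$s$q * v$q) * (\<Sum>p\<in>UNIV. J$s$p * v$p)" .
  qed
  also have "\<dots> = (norm (J *v v))\<^sup>2"
    by (simp add: power2_norm_eq_inner inner_vec_def matrix_vector_mult_def)
  finally show ?thesis .
qed

lemma frob_decomp:
  fixes J :: "real^'k^'m" and W :: "real^'k^'k" and V :: "'c::finite \<Rightarrow> real^'k"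
  assumes W: "\<forall>i j. W$i$j = (\<Sum>k\<in>UNIV. V k $ i * V k $ j)"
  shows "frob_inner (transpose J ** J) W = (\<Sum>k\<in>UNIV. (norm (J *v V k))\<^sup>2)"
proof -
  have Weq: "W = (\<Sum>k\<in>UNIV. outer (V k))"
    by (simp add: vec_eq_iff W outer_def sum_component)
  have "frob_inner (transpose J ** J) W = frob_inner (transpose J ** J) (\<Sum>k\<in>UNIV. outer (V k))"
    using Weq by simp
  also have "\<dots> = (\<Sum>k\<in>UNIV. frob_inner (transpose J ** J) (outer (V k)))"
    by (rule frob_sum) simp
  also have "\<dots> = (\<Sum>k\<in>UNIV. (norm (J *v V k))\<^sup>2)"
    by (simp add: frob_outer)
  finally show ?thesis .
qed

lemma wvec_decomp:
  fixes W :: "real^('n::finite \<times> 'r::finite)^('n \<times> 'r)" and V :: "'c::finite \<Rightarrow> real^('n \<times> 'r)"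
  assumes W: "\<forall>i j. W$i$j = (\<Sum>k\<in>UNIV. V k $ i * V k $ j)"
  shows "wvec W = vecm (\<Sum>k\<in>UNIV. unvecm (V k) ** transpose (unvecm (V k)))"
proof -
  have "wvec W $ (a,b) = vecm (\<Sum>k\<in>UNIV. unvecm (V k) ** transpose (unvecm (V k))) $ (a,b)" for a b
  proof -
    have "wvec W $ (a,b) = (\<Sum>i\<in>UNIV. \<Sum>k\<in>UNIV. V k $ (a,i) * V k $ (b,i))"
      by (simp add: wvec_def W)
    also have "\<dots> = (\<Sum>k\<in>UNIV. \<Sum>i\<in>UNIV. V k $ (a,i) * V k $ (b,i))"
      by (rule sum.swap)
    finally show ?thesis
      by (simp add: vecm_def unvecm_def sum_component matrix_matrix_mult_def transpose_def)
  qed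
  then show ?thesis by (simp add: vec_eq_iff)
qed

lemma proj_exists:
  fixes X Z :: "real^'r^'n"
  shows "\<exists>P :: real^'n^'n. transpose P = P \<and> P ** P = P \<and> P ** X = X \<and> P ** Z = Z \<and> rank P \<le> CARD('r) + rank Z"
proof -
  obtain BZ where BZ: "BZ \<subseteq> columns Z" "independent BZ" "columns Z \<subseteq> span BZ" "card BZ = dim (columns Z)"
    using basis_exists by blast
  define G where "G = columns X \<union> BZ"
  have finBZ: "finite BZ" using BZ(2) finiteI_independent by blast
  have cX: "columns X = range (\<lambda>i. column i X)" by (auto simp: columns_def)
  have fincX: "finite (columns X)" unfolding cX by simp
  have cardcX: "card (columns X) \<le> CARD('r)" unfolding cX by (rule card_image_le) simp
  have finG: "finite G" using finBZ fincX G_def by simp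
  have cardG: "card G \<le> CARD('r) + rank Z"
  proof -
    have "card G \<le> card (columns X) + card BZ" unfolding G_def by (rule card_Un_le)
    then show ?thesis using cardcX BZ(4) column_rank_def[of Z] by simp
  qed
  define S where "S = span G"
  have subS: "subspace S" unfolding S_def by simp
  obtain B where B: "B \<subseteq> S" "pairwise orthogonal B" "\<And>x. x \<in> B \<Longrightarrow> norm x = 1"
      "independent B" "card B = dim S" "span B = S"
    using orthonormal_basis_subspace[OF subS] by metis
  have finB: "finite B" using B(4) finiteI_independent by blast
  have dimS: "dim S \<le> card G" unfolding S_def using dim_le_card[OF span_superset finG] by simp
  define P :: "real^'n^'n" where "P = (\<chi> i j. \<Sum>b\<in>B. b$i * b$j)"
  have Pv: "P *v x = (\<Sum>b\<in>B. (b \<bullet> x) *\<^sub>R b)" for x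
  proof -
    have "(P *v x) $ i = (\<Sum>b\<in>B. (b \<bullet> x) * b $ i)" for i
    proof -
      have "(P *v x) $ i = (\<Sum>j\<in>UNIV. \<Sum>b\<in>B. b$i * b$j * x$j)"
        by (simp add: P_def matrix_vector_mult_def sum_distrib_right)
      also have "\<dots> = (\<Sum>b\<in>B. \<Sum>j\<in>UNIV. b$i * b$j * x$j)" by (rule sum.swap)
      also have "\<dots> = (\<Sum>b\<in>B. (b \<bullet> x) * b $ i)"
        by (simp add: inner_vec_def sum_distrib_left sum_distrib_right mult_ac)
      finally show ?thesis .
    qed
    then show ?thesis by (simp add: vec_eq_iff sum_component)
  qed
  have Pb: "P *v b = b" if "b \<in> B" for b
  proof -
    have "(\<Sum>c\<in>B. (c \<bullet> b) *\<^sub>R c) = (\<Sum>c\<in>B. if c = b then b else 0)"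
    proof (rule sum.cong[OF refl])
      fix c assume c: "c \<in> B"
      show "(c \<bullet> b) *\<^sub>R c = (if c = b then b else 0)"
      proof (cases "c = b")
        case True
        then have "c \<bullet> b = 1" using B(3)[OF that] by (simp add: dot_square_norm)
        then show ?thesis using True by simp
      next
        case False
        then have "c \<bullet> b = 0" using B(2) c that unfolding pairwise_def orthogonal_def by blast
        then show ?thesis using False by simp
      qed
    qed
    also have "\<dots> = b" using that finB by (simp add: sum.delta')
    finally show ?thesis using Pv by simp
  qed
  have PS: "P *v x = x" if "x \<in> S" for x
  proof -
    have "x \<in> span B" using that B(6) by simp
    then show ?thesis
    proof (induction rule: span_induct_alt)
      case base
      then show ?case by simp
    next
      case (step c x y)
      then show ?case using Pb[OF step(1)]
        by (simp add: matrix_vector_right_distrib matrix_vector_mult_scaleR)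
    qed
  qed
  have PinS: "P *v x \<in> S" for x
    unfolding Pv B(6)[symmetric] by (intro span_sum span_mul span_base) (auto intro: span_scale span_base)
  have "transpose P = P" by (simp add: P_def transpose_def vec_eq_iff mult.commute)
  moreover have "P ** P = P"
    unfolding matrix_eq by (simp add: matrix_vector_mul_assoc[symmetric] PS PinS)
  moreover have "P ** X = X"
  proof -
    have "X *v x \<in> S" for x
      using matrix_vector_mult_in_columnspace[of X x] span_mono[of "columns X" G]
      unfolding S_def G_def by auto
    then show ?thesis unfolding matrix_eq by (simp add: matrix_vector_mul_assoc[symmetric] PS)
  qed
  moreover have "P ** Z = Z"
  proof -
    have "span (columns Z) \<subseteq> S" unfolding S_def G_def
      by (metis BZ(3) Un_upper2 span_mono span_span subset_trans)
    then have "Z *v x \<in> S" for x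
      using matrix_vector_mult_in_columnspace[of Z x] by auto
    then show ?thesis unfolding matrix_eq by (simp add: matrix_vector_mul_assoc[symmetric] PS)
  qed
  moreover have "rank P \<le> CARD('r) + rank Z"
  proof -
    have "rank P = dim (range (\<lambda>x. P *v x))" by (rule rank_dim_range)
    also have "\<dots> \<le> dim S" using PinS by (intro dim_subset) auto
    finally show ?thesis using dimS cardG by simp
  qed
  ultimately show ?thesis by blast
qed

lemma mrd: "((A::real^'b^'a) + B) ** C = A ** C + B ** C"
  by (simp add: vec_eq_iff matrix_matrix_mult_def sum.distrib algebra_simps)
lemma mdl: "(A::real^'b^'a) ** (B - C) = A ** B - A ** C"
  by (simp add: vec_eq_iff matrix_matrix_mult_def sum_subtractf algebra_simps)
lemma mdr: "((A::real^'b^'a) - B) ** C = A ** C - B ** C"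
  by (simp add: vec_eq_iff matrix_matrix_mult_def sum_subtractf algebra_simps)
lemma msl: "(A::real^'b^'a) ** (\<Sum>k\<in>K. F k) = (\<Sum>k\<in>K. A ** F k)"
  by (induction K rule: infinite_finite_induct) (simp_all add: matrix_add_ldistrib)
lemma msr: "(\<Sum>k\<in>K. F k) ** (C::real^'c^'b) = (\<Sum>k\<in>K. F k ** C)"
  by (induction K rule: infinite_finite_induct) (simp_all add: mrd)

lemma inner_trace: "(M::real^'b^'a) \<bullet> N = trace (transpose M ** N)"
proof -
  have "M \<bullet> N = (\<Sum>i\<in>UNIV. \<Sum>j\<in>UNIV. M$i$j * N$i$j)" by (simp add: inner_vec_def)
  also have "\<dots> = (\<Sum>j\<in>UNIV. \<Sum>i\<in>UNIV. M$i$j * N$i$j)" by (rule sum.swap)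
  finally show ?thesis by (simp add: trace_def matrix_matrix_mult_def transpose_def)
qed

lemma inner_PFP:
  fixes P F G :: "real^'n^'n"
  assumes "transpose P = P"
  shows "(P ** F ** P) \<bullet> G = F \<bullet> (P ** G ** P)"
proof -
  have "(P ** F ** P) \<bullet> G = trace (P ** (transpose F ** (P ** G)))"
    by (simp add: inner_trace matrix_transpose_mul assms matrix_mul_assoc)
  also have "\<dots> = trace ((transpose F ** (P ** G)) ** P)" by (rule trace_mul_sym)
  also have "\<dots> = F \<bullet> (P ** G ** P)" by (simp add: inner_trace matrix_mul_assoc)
  finally show ?thesis .
qed

lemma norm_PFP:
  fixes P F :: "real^'n^'n"
  assumes "transpose P = P" "P ** P = P"
  shows "norm (P ** F ** P) \<le> norm F"
proof -
  have idem: "P ** (P ** F ** P) ** P = P ** F ** P"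
    by (metis assms(2) matrix_mul_assoc)
  have "(norm (P ** F ** P))\<^sup>2 = (P ** F ** P) \<bullet> (P ** F ** P)" by (simp add: power2_norm_eq_inner)
  also have "\<dots> = F \<bullet> (P ** F ** P)" using inner_PFP[OF assms(1), of F "P ** F ** P"] idem by simp
  also have "\<dots> \<le> norm F * norm (P ** F ** P)" by (rule norm_cauchy_schwarz)
  finally have "norm (P ** F ** P) * norm (P ** F ** P) \<le> norm F * norm (P ** F ** P)"
    by (simp add: power2_eq_square)
  then show ?thesis
    by (metis mult_right_le_imp_le norm_ge_zero order.order_iff_strict mult_zero_right)
qed

definition Bf :: "nat \<Rightarrow> (nat \<Rightarrow> real^'n^'n \<Rightarrow> real) \<Rightarrow> real^'n^'n \<Rightarrow> real^'n^'n \<Rightarrow> real" where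
  "Bf m A E F = (\<Sum>i<m. A i E * A i F)"

definition jm :: "real^'r^'n \<Rightarrow> real^'r^'n \<Rightarrow> real^'n^'n" where
  "jm X Y = X ** transpose Y + Y ** transpose X"

lemma Bf_diff2:
  assumes lin: "\<forall>i<m. linear (A i)"
  shows "Bf m A E (F - G) = Bf m A E F - Bf m A E G"
proof -
  have "Bf m A E (F - G) = (\<Sum>i<m. A i E * A i F - A i E * A i G)"
    unfolding Bf_def by (rule sum.cong) (simp_all add: lin linear_diff right_diff_distrib)
  then show ?thesis by (simp add: Bf_def sum_subtractf)
qed

lemma Bf_sum2:
  assumes lin: "\<forall>i<m. linear (A i)"
  shows "Bf m A E (\<Sum>k\<in>K. G k) = (\<Sum>k\<in>K. Bf m A E (G k))"
proof -
  have "Bf m A E (\<Sum>k\<in>K. G k) = (\<Sum>i<m. \<Sum>k\<in>K. A i E * A i (G k))"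
    unfolding Bf_def by (rule sum.cong) (simp_all add: lin linear_sum sum_distrib_left)
  also have "\<dots> = (\<Sum>k\<in>K. \<Sum>i<m. A i E * A i (G k))" by (rule sum.swap)
  finally show ?thesis by (simp add: Bf_def)
qed

lemma Bf_zero1:
  assumes lin: "\<forall>i<m. linear (A i)"
  shows "Bf m A 0 F = 0"
  unfolding Bf_def by (rule sum.neutral) (simp add: lin linear_0)

lemma Bf_zero2:
  assumes lin: "\<forall>i<m. linear (A i)"
  shows "Bf m A E 0 = 0"
  unfolding Bf_def by (rule sum.neutral) (simp add: lin linear_0)

lemma Bf_scale:
  assumes lin: "\<forall>i<m. linear (A i)"
  shows "Bf m A (a *\<^sub>R E) (b *\<^sub>R F) = a * b * Bf m A E F"
proof -
  have "Bf m A (a *\<^sub>R E) (b *\<^sub>R F) = (\<Sum>i<m. a * b * (A i E * A i F))"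
    unfolding Bf_def by (rule sum.cong) (simp_all add: lin linear_scale)
  then show ?thesis by (simp add: Bf_def sum_distrib_left)
qed

lemma Sq_pm:
  assumes lin: "\<forall>i<m. linear (A i)"
  shows "sqnormA m A (E + F) - sqnormA m A (E - F) = 4 * Bf m A E F"
proof -
  have "sqnormA m A (E + F) - sqnormA m A (E - F) = (\<Sum>i<m. 4 * (A i E * A i F))"
    unfolding sqnormA_def sum_subtractf[symmetric]
    by (rule sum.cong) (simp_all add: lin linear_add linear_diff power2_eq_square algebra_simps)
  then show ?thesis by (simp add: Bf_def sum_distrib_left)
qed

lemma polar:
  fixes E F :: "real^'n^'n"
  assumes lin: "\<forall>i<m. linear (A i)" and nu: "\<nu> > 0"
    and rip: "\<forall>E::real^'n^'n. rank E \<le> p \<longrightarrow> (1-\<delta>)*(norm E)\<^sup>2 \<le> (1/\<nu>)* sqnormA m A E \<and> (1/\<nu>)* sqnormA m A E \<le> (1+\<delta>)*(norm E)\<^sup>2"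
    and rk: "\<forall>s t. rank (s *\<^sub>R E + t *\<^sub>R F) \<le> p"
  shows "\<nu> * (E \<bullet> F - \<delta> * (norm E * norm F)) \<le> Bf m A E F"
proof (cases "E = 0 \<or> F = 0")
  case True
  then show ?thesis using Bf_zero1[OF lin] Bf_zero2[OF lin] by auto
next
  case False
  define \<alpha> where "\<alpha> = norm E"
  define \<beta> where "\<beta> = norm F"
  have ap: "\<alpha> > 0" "\<beta> > 0" using False by (auto simp: \<alpha>_def \<beta>_def)
  define a where "a = (1/\<alpha>) *\<^sub>R E"
  define b where "b = (1/\<beta>) *\<^sub>R F"
  have na: "a \<bullet> a = 1" "b \<bullet> b = 1"
    using ap by (simp_all add: a_def b_def \<alpha>_def \<beta>_def dot_square_norm power2_eq_square)
  define c where "c = a \<bullet> b"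
  have cdef: "c = (E \<bullet> F) / (\<alpha> * \<beta>)" by (simp add: c_def a_def b_def)
  have Bab: "Bf m A a b = Bf m A E F / (\<alpha> * \<beta>)"
    using Bf_scale[OF lin, of "1/\<alpha>" E "1/\<beta>" F] by (simp add: a_def b_def)
  have r1: "rank (a + b) \<le> p" using rk by (simp add: a_def b_def)
  have r2: "rank (a - b) \<le> p" using rk[rule_format, of "1/\<alpha>" "- 1/\<beta>"] by (simp add: a_def b_def)
  have n1: "(norm (a + b))\<^sup>2 = 2 + 2 * c"
    by (simp add: power2_norm_eq_inner inner_add_left inner_add_right na c_def inner_commute)
  have n2: "(norm (a - b))\<^sup>2 = 2 - 2 * c"
    by (simp add: power2_norm_eq_inner inner_diff_left inner_diff_right na c_def inner_commute)
  have i1: "(1-\<delta>) * (2 + 2*c) \<le> (1/\<nu>) * sqnormA m A (a + b)" using rip r1 n1 by metis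
  have i2: "(1/\<nu>) * sqnormA m A (a - b) \<le> (1+\<delta>) * (2 - 2*c)" using rip r2 n2 by metis
  have "(1/\<nu>) * (4 * Bf m A a b) = (1/\<nu>) * sqnormA m A (a + b) - (1/\<nu>) * sqnormA m A (a - b)"
    using Sq_pm[OF lin, of a b] by (metis right_diff_distrib)
  also have "\<dots> \<ge> 4 * c - 4 * \<delta>" using i1 i2 by (simp add: algebra_simps)
  finally have "c - \<delta> \<le> Bf m A a b / \<nu>" by simp
  then have "\<nu> * (c - \<delta>) \<le> Bf m A a b" using nu by (simp add: field_simps)
  then have "\<nu> * (c - \<delta>) * (\<alpha> * \<beta>) \<le> Bf m A E F" using ap Bab
    by (simp add: field_simps)
  moreover have "\<nu> * (c - \<delta>) * (\<alpha> * \<beta>) = \<nu> * (E \<bullet> F - \<delta> * (\<alpha> * \<beta>))"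
    using ap by (simp add: cdef field_simps)
  ultimately show ?thesis unfolding \<alpha>_def \<beta>_def by linarith
qed

lemma core:
  fixes X Z Y :: "real^'r^'n" and Ys :: "'c::finite \<Rightarrow> real^'r^'n" and P :: "real^'n^'n"
  assumes lin: "\<forall>i<m. linear (A i)" and nu: "\<nu> > 0" and dl: "0 \<le> \<delta>"
    and rip: "\<forall>E::real^'n^'n. rank E \<le> p \<longrightarrow> (1-\<delta>)*(norm E)\<^sup>2 \<le> (1/\<nu>) * sqnormA m A E \<and> (1/\<nu>) * sqnormA m A E \<le> (1+\<delta>)*(norm E)\<^sup>2"
    and grad: "\<forall>Y. fd m A Z X Y = 0" and hess: "\<forall>Y. 0 \<le> fdd m A Z X Y Y"
    and Psym: "transpose P = P" and Pidem: "P ** P = P" and PX: "P ** X = X" and PZ: "P ** Z = Z"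
    and Prk: "\<forall>F. rank (P ** F ** P) \<le> p"
  shows "(X ** transpose X - Z ** transpose Z) \<bullet> (jm X Y - (\<Sum>k\<in>UNIV. Ys k ** transpose (Ys k)))
           - (\<Sum>k\<in>UNIV. (norm (jm X (Ys k)))\<^sup>2) / 2
        \<le> \<delta> * (norm (X ** transpose X - Z ** transpose Z) * norm (jm X Y - (\<Sum>k\<in>UNIV. Ys k ** transpose (Ys k)))
           + (\<Sum>k\<in>UNIV. (norm (jm X (Ys k)))\<^sup>2) / 2)"
proof -
  define E0 where "E0 = X ** transpose X - Z ** transpose Z"
  define Um where "Um = jm X Y - (\<Sum>k\<in>UNIV. Ys k ** transpose (Ys k))"
  define T where "T = (\<Sum>k\<in>UNIV. (norm (jm X (Ys k)))\<^sup>2)"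
  define G where "G k = (P ** Ys k) ** transpose (P ** Ys k)" for k
  define J' where "J' k = jm X (P ** Ys k)" for k
  define Um' where "Um' = jm X (P ** Y) - (\<Sum>k\<in>UNIV. G k)"
  have XtP: "transpose X ** P = transpose X"
    by (metis PX Psym matrix_transpose_mul)
  have ZtP: "transpose Z ** P = transpose Z"
    by (metis PZ Psym matrix_transpose_mul)
  have tPY: "transpose (P ** W) = transpose W ** P" for W :: "real^'r^'n"
    by (simp add: matrix_transpose_mul Psym)
  have E0P: "P ** E0 ** P = E0"
    unfolding E0_def mdl mdr
    by (metis PX PZ XtP ZtP matrix_mul_assoc)
  have jmP: "jm X (P ** W) = P ** jm X W ** P" for W
    unfolding jm_def matrix_add_ldistrib mrd tPY
    by (metis PX XtP matrix_mul_assoc)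
  have GP: "G k = P ** (Ys k ** transpose (Ys k)) ** P" for k
    unfolding G_def tPY by (simp add: matrix_mul_assoc)
  have UmP: "Um' = P ** Um ** P"
    unfolding Um'_def Um_def mdl mdr msl msr jmP GP by simp
  have fix2: "P ** (P ** F ** P) ** P = P ** F ** P" for F
    by (metis Pidem matrix_mul_assoc)
  have rkfix: "rank M \<le> p" if "P ** M ** P = M" for M
    using Prk that by metis
  have fd_eq: "fd m A Z X W = 2 * Bf m A E0 (jm X W)" for W
    by (simp add: fd_def Bf_def E0_def jm_def sum_distrib_left)
  have g0: "Bf m A E0 (jm X (P ** Y)) = 0" using grad fd_eq by simp
  have fdd_eq: "fdd m A Z X W W = 2 * sqnormA m A (jm X W) + 4 * Bf m A E0 (W ** transpose W)" for W
  proof -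
    have "fdd m A Z X W W = (\<Sum>i<m. 2 * (A i (jm X W))\<^sup>2 + 4 * (A i E0 * A i (W ** transpose W)))"
      unfolding fdd_def
    proof (rule sum.cong[OF refl])
      fix i assume "i \<in> {..<m}"
      then have li: "linear (A i)" using lin by simp
      have "A i (W ** transpose W + W ** transpose W) = A i (W ** transpose W) + A i (W ** transpose W)"
        by (rule linear_add[OF li])
      then show "2 * (A i (X ** transpose W + W ** transpose X) * A i (X ** transpose W + W ** transpose X) +
          A i (X ** transpose X - Z ** transpose Z) * A i (W ** transpose W + W ** transpose W)) =
          2 * (A i (jm X W))\<^sup>2 + 4 * (A i E0 * A i (W ** transpose W))"
        by (simp add: E0_def jm_def power2_eq_square algebra_simps)
    qed
    then show ?thesis by (simp add: sqnormA_def Bf_def sum.distrib sum_distrib_left)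
  qed
  have hsum: "0 \<le> (\<Sum>k\<in>UNIV. 2 * sqnormA m A (J' k) + 4 * Bf m A E0 (G k))"
    by (rule sum_nonneg) (metis hess fdd_eq J'_def G_def)
  have J'P: "J' k = P ** jm X (Ys k) ** P" for k using jmP J'_def by simp
  have sqJ: "sqnormA m A (J' k) \<le> \<nu> * (1 + \<delta>) * (norm (jm X (Ys k)))\<^sup>2" for k
  proof -
    have "rank (J' k) \<le> p" using J'P Prk by simp
    then have "(1/\<nu>) * sqnormA m A (J' k) \<le> (1+\<delta>) * (norm (J' k))\<^sup>2" using rip by blast
    then have a: "sqnormA m A (J' k) \<le> \<nu> * ((1+\<delta>) * (norm (J' k))\<^sup>2)" using nu by (simp add: field_simps)
    have "norm (J' k) \<le> norm (jm X (Ys k))" unfolding J'P by (rule norm_PFP[OF Psym Pidem])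
    then have "(norm (J' k))\<^sup>2 \<le> (norm (jm X (Ys k)))\<^sup>2" by (simp add: power_mono)
    then have "\<nu> * ((1+\<delta>) * (norm (J' k))\<^sup>2) \<le> \<nu> * ((1+\<delta>) * (norm (jm X (Ys k)))\<^sup>2)"
      using nu dl by (intro mult_left_mono) auto
    then show ?thesis using a by simp
  qed
  have BUm': "Bf m A E0 Um' = - (\<Sum>k\<in>UNIV. Bf m A E0 (G k))"
    unfolding Um'_def Bf_diff2[OF lin] Bf_sum2[OF lin] g0 by simp
  have up: "Bf m A E0 Um' \<le> \<nu> * (1 + \<delta>) * T / 2"
  proof -
    have "Bf m A E0 Um' \<le> (\<Sum>k\<in>UNIV. sqnormA m A (J' k)) / 2"
      using hsum BUm' by (simp add: sum.distrib sum_distrib_left[symmetric])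
    also have "(\<Sum>k\<in>UNIV. sqnormA m A (J' k)) \<le> (\<Sum>k\<in>UNIV. \<nu> * (1 + \<delta>) * (norm (jm X (Ys k)))\<^sup>2)"
      by (rule sum_mono) (rule sqJ)
    finally show ?thesis by (simp add: T_def sum_distrib_left)
  qed
  have lo: "\<nu> * (E0 \<bullet> Um' - \<delta> * (norm E0 * norm Um')) \<le> Bf m A E0 Um'"
  proof (rule polar[OF lin nu rip], intro allI)
    fix s t
    have "P ** (s *\<^sub>R E0 + t *\<^sub>R Um') ** P = s *\<^sub>R E0 + t *\<^sub>R Um'"
      by (simp add: matrix_add_ldistrib mrd matrix_scalar_ac scalar_matrix_assoc[symmetric] E0P UmP fix2)
    then show "rank (s *\<^sub>R E0 + t *\<^sub>R Um') \<le> p" by (rule rkfix)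
  qed
  have N: "E0 \<bullet> Um' = E0 \<bullet> Um"
    using inner_PFP[OF Psym, of E0 Um] E0P UmP by simp
  have nU: "norm Um' \<le> norm Um" unfolding UmP by (rule norm_PFP[OF Psym Pidem])
  have "\<nu> * (E0 \<bullet> Um - \<delta> * (norm E0 * norm Um')) \<le> \<nu> * ((1 + \<delta>) * T / 2)"
    using lo up N by simp
  then have "E0 \<bullet> Um - \<delta> * (norm E0 * norm Um') \<le> (1 + \<delta>) * T / 2"
    using nu by (simp add: mult_le_cancel_left_pos)
  moreover have "\<delta> * (norm E0 * norm Um') \<le> \<delta> * (norm E0 * norm Um)"
    using dl nU by (intro mult_left_mono) auto
  ultimately have "E0 \<bullet> Um - T / 2 \<le> \<delta> * (norm E0 * norm Um + T / 2)"
    by (simp add: algebra_simps)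
  then show ?thesis by (simp add: E0_def Um_def T_def)
qed

lemma config_bound:
  fixes X Z :: "real^'r^'n" and y :: "real^('n \<times> 'r)" and W :: "real^('n \<times> 'r)^('n \<times> 'r)"
  assumes ne: "X ** transpose X \<noteq> Z ** transpose Z"
    and lin: "\<forall>i<m. linear (A i)" and nu: "\<nu> > 0" and dl: "0 \<le> \<delta>"
    and rip: "\<forall>E::real^'n^'n. rank E \<le> CARD('r) + rank Z \<longrightarrow> (1-\<delta>)*(norm E)\<^sup>2 \<le> (1/\<nu>) * sqnormA m A E \<and> (1/\<nu>) * sqnormA m A E \<le> (1+\<delta>)*(norm E)\<^sup>2"
    and grad: "\<forall>Y. fd m A Z X Y = 0" and hess: "\<forall>Y. 0 \<le> fdd m A Z X Y Y"
    and fe: "feasible X Z t y W"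
  shows "objective X Z y W \<le> \<delta> * (1 + t) + t"
proof -
  have psdW: "psd W" and une: "Jmat X *v y - wvec W \<noteq> 0"
    and teq: "frob_inner (transpose (Jmat X) ** Jmat X) W / (norm (err_vec X Z) * norm (Jmat X *v y - wvec W)) = 2 * t"
    using fe unfolding feasible_def by auto
  obtain V :: "'n \<times> 'r \<Rightarrow> real^('n \<times> 'r)" where V: "\<forall>i j. W$i$j = (\<Sum>k\<in>UNIV. V k $ i * V k $ j)"
    using psd_decomp[OF psdW] by blast
  obtain P :: "real^'n^'n" where P: "transpose P = P" "P ** P = P" "P ** X = X" "P ** Z = Z"
      "rank P \<le> CARD('r) + rank Z"
    using proj_exists[of X Z] by blast
  have Prk: "\<forall>F. rank (P ** F ** P) \<le> CARD('r) + rank Z"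
    by (metis P(5) le_trans rank_mul_le_left)
  define Y where "Y = unvecm y"
  define Ys where "Ys k = unvecm (V k)" for k
  define E0 where "E0 = X ** transpose X - Z ** transpose Z"
  define Um where "Um = jm X Y - (\<Sum>k\<in>UNIV. Ys k ** transpose (Ys k))"
  define T where "T = (\<Sum>k\<in>UNIV. (norm (jm X (Ys k)))\<^sup>2)"
  have c: "E0 \<bullet> Um - T / 2 \<le> \<delta> * (norm E0 * norm Um + T / 2)"
    unfolding E0_def Um_def T_def
    by (rule core[OF lin nu dl rip grad hess P(1-4) Prk])
  have e: "err_vec X Z = vecm E0" by (simp add: err_vec_def E0_def)
  have u: "Jmat X *v y - wvec W = vecm Um"
    by (simp add: Jmat_apply wvec_decomp[OF V] Um_def jm_def Y_def Ys_def vecm_diff)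
  have Tf: "frob_inner (transpose (Jmat X) ** Jmat X) W = T"
    by (simp add: frob_decomp[OF V] T_def Jmat_apply norm_vecm jm_def Ys_def)
  have E0ne: "E0 \<noteq> 0" using ne by (simp add: E0_def)
  have Umne: "Um \<noteq> 0" using une u by (auto simp: vecm_def vec_eq_iff)
  define D where "D = norm E0 * norm Um"
  have Dpos: "D > 0" using E0ne Umne by (simp add: D_def)
  have TD0: "T / D = 2 * t" using teq by (simp add: e u norm_vecm Tf D_def)
  have TD: "T = 2 * t * D" using TD0 Dpos by (metis divide_eq_eq less_irrefl)
  have obj: "objective X Z y W = (E0 \<bullet> Um) / D"
    by (simp add: objective_def e u norm_vecm inner_vecm D_def)
  have "E0 \<bullet> Um \<le> (\<delta> * (1 + t) + t) * D"
    using c TD by (simp add: D_def algebra_simps)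
  then have "(E0 \<bullet> Um) / D \<le> \<delta> * (1 + t) + t" using Dpos by (simp add: divide_le_eq)
  then show ?thesis using obj by simp
qed

theorem lemma14:
  fixes X Z :: "real^'r^'n"
  assumes "X ** transpose X \<noteq> Z ** transpose Z"
  shows "ereal (SUP t\<in>{t. 0 \<le> t \<and> (\<exists>y W. feasible X Z t y W)}. (cos_theta X Z t - t) / (1 + t))
           \<le> delta_XZ X Z"
proof -
  define Tset where "Tset = {t. 0 \<le> t \<and> (\<exists>y W. feasible X Z t y W)}"
  have Tne: "Tset \<noteq> {}"
  proof -
    define W :: "real^('n \<times> 'r)^('n \<times> 'r)" where "W = mat 1"
    define y :: "real^('n \<times> 'r)" where "y = 0"
    define u where "u = Jmat X *v y - wvec W"
    define fr where "fr = frob_inner (transpose (Jmat X) ** Jmat X) W"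
    define t0 where "t0 = fr / (norm (err_vec X Z) * norm u) / 2"
    have psdW: "psd W" by (simp add: W_def psd_def)
    have "u $ (a, a) = - real CARD('r)" for a
      by (simp add: u_def y_def wvec_def W_def mat_def)
    moreover have "real CARD('r) \<noteq> 0" by simp
    ultimately have une: "u \<noteq> 0" by (metis zero_index neg_0_equal_iff_equal)
    have Wd: "\<forall>i j. W$i$j = (\<Sum>k\<in>UNIV. axis k (1::real) $ i * axis k 1 $ j)"
    proof (intro allI)
      fix i j :: "'n \<times> 'r"
      have "(\<Sum>k\<in>UNIV. axis k (1::real) $ i * axis k 1 $ j) = (\<Sum>k\<in>UNIV. if k = i then (if j = i then 1 else 0) else 0)"
        by (rule sum.cong) (auto simp: axis_def)
      also have "\<dots> = (if j = i then 1 else 0)" by (simp add: sum.delta)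
      finally show "W$i$j = (\<Sum>k\<in>UNIV. axis k (1::real) $ i * axis k 1 $ j)" by (simp add: W_def mat_def)
    qed
    have frpos: "0 \<le> fr" unfolding fr_def frob_decomp[OF Wd] by (simp add: sum_nonneg)
    have "feasible X Z t0 y W"
      unfolding feasible_def using psdW une by (simp add: u_def[symmetric] fr_def[symmetric] t0_def)
    moreover have "0 \<le> t0" using frpos by (simp add: t0_def)
    ultimately show ?thesis unfolding Tset_def by blast
  qed
  have bound: "(SUP t\<in>Tset. (cos_theta X Z t - t) / (1 + t)) \<le> \<delta>"
    if dD: "\<delta> \<in> {\<delta>. \<exists>m\<ge>1. \<exists>A :: nat \<Rightarrow> real^'n^'n \<Rightarrow> real.
       (\<forall>i<m. linear (A i)) \<and> is_RIP m A \<delta> (CARD('r) + rank Z) \<and>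
       grad_zero (fA m A Z) X \<and> hess_psd (fA m A Z) X}" for \<delta>
  proof -
    obtain m and A :: "nat \<Rightarrow> real^'n^'n \<Rightarrow> real" where lin: "\<forall>i<m. linear (A i)"
      and rip0: "is_RIP m A \<delta> (CARD('r) + rank Z)" and g: "grad_zero (fA m A Z) X"
      and h: "hess_psd (fA m A Z) X"
      using dD by blast
    obtain \<nu> where dl: "0 \<le> \<delta>" and nu: "\<nu> > 0"
      and rip: "\<forall>E::real^'n^'n. rank E \<le> CARD('r) + rank Z \<longrightarrow> (1-\<delta>)*(norm E)\<^sup>2 \<le> (1/\<nu>) * sqnormA m A E \<and> (1/\<nu>) * sqnormA m A E \<le> (1+\<delta>)*(norm E)\<^sup>2"
      using rip0 unfolding is_RIP_def by blast
    have grad: "\<forall>Y. fd m A Z X Y = 0" using grad_zero_eq[OF lin g] by blast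
    have hess: "\<forall>Y. 0 \<le> fdd m A Z X Y Y" using hess_eq[OF lin h] by blast
    show ?thesis
    proof (rule cSUP_least[OF Tne])
      fix t assume "t \<in> Tset"
      then have t0: "0 \<le> t" and ex: "\<exists>y W. feasible X Z t y W" unfolding Tset_def by auto
      have "cos_theta X Z t \<le> \<delta> * (1 + t) + t"
        unfolding cos_theta_def
      proof (rule cSup_least)
        show "{objective X Z y W |y W. feasible X Z t y W} \<noteq> {}" using ex by blast
      next
        fix x assume "x \<in> {objective X Z y W |y W. feasible X Z t y W}"
        then obtain y W where "feasible X Z t y W" "x = objective X Z y W" by blast
        then show "x \<le> \<delta> * (1 + t) + t"
          using config_bound[OF assms lin nu dl rip grad hess] by blast
      qed
      then have "cos_theta X Z t - t \<le> \<delta> * (1 + t)" by simp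
      then show "(cos_theta X Z t - t) / (1 + t) \<le> \<delta>" using t0 by (simp add: divide_le_eq)
    qed
  qed
  show ?thesis
    unfolding delta_XZ_def Tset_def[symmetric]
  proof (rule Inf_greatest)
    fix x assume "x \<in> ereal ` {\<delta>. \<exists>m\<ge>1. \<exists>A :: nat \<Rightarrow> real^'n^'n \<Rightarrow> real.
       (\<forall>i<m. linear (A i)) \<and> is_RIP m A \<delta> (CARD('r) + rank Z) \<and>
       grad_zero (fA m A Z) X \<and> hess_psd (fA m A Z) X}"
    then obtain \<delta> where d: "\<delta> \<in> {\<delta>. \<exists>m\<ge>1. \<exists>A :: nat \<Rightarrow> real^'n^'n \<Rightarrow> real.
       (\<forall>i<m. linear (A i)) \<and> is_RIP m A \<delta> (CARD('r) + rank Z) \<and>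
       grad_zero (fA m A Z) X \<and> hess_psd (fA m A Z) X}" and x: "x = ereal \<delta>" by blast
    show "ereal (SUP t\<in>Tset. (cos_theta X Z t - t) / (1 + t)) \<le> x"
      using bound[OF d] x by simp
  qed
qed

end
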